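(* Let $n,k_1,k_2$ be nonnegative integers with $k_1+k_2\le n$ and $\ell=n-k_1-k_2$. If $G\in\mathcal{S}$, then there is a matrix $G'\in\mathcal{T}$ such that the $\mathbb{Z}_4$-codes with generator matrices $G$ and $G'$ are equivalent.
   Context: $\mathbb{Z}_4=\{0,1,2,3\}$ is the ring of integers modulo $4$; a $\mathbb{Z}_4$-code of length $n$ is a submodule of $\mathbb{Z}_4^n$, and two codes are equivalent if one is obtained from the other by permuting coordinates and changing the signs of some coordinates. Order $\mathbb{Z}_4$ by $0<1<2<3$ and order vectors of $\mathbb{Z}_4^m$ lexicographically (compare first differing coordinate). Let $M_{m\times n}(R)$ denote the set of $m\times n$ matrices with entries in $R$. For $T\subset M_{m\times n}(\mathbb{Z}_4)$ let $P_{row}(T)$ be the set of matrices in $T$ whose rows $a_1,\dots,a_m$ satisfy $a_i\le a_j$ whenever $i\le j$. For $(0,1)$-matrices $A$ ($k_1\times k_2$), $D$ ($k_2\times\ell$) and a $\mathbb{Z}_4$-matrix $B$ ($k_1\times\ell$), let $G(A,B,D)=\begin{pmatrix} I_{k_1} & A & B\\ O & 2I_{k_2} & 2D\end{pmatrix}$ (a $\mathbb{Z}_4$-matrix, $I_k$ identity, $O$ zero matrix). Let $\mathcal{S}=\{G(A,B,D)\mid A\in M_{k_1\times k_2}(\{0,1\}),\ B\in M_{k_1\times\ell}(\mathbb{Z}_4),\ D\in M_{k_2\times\ell}(\{0,1\})\}$ and $\mathcal{T}=\{G(A,B,D)\in\mathcal{S}\mid A\in P_{row}(M_{k_1\times k_2}(\{0,1\}))\}$.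 *)

theory Defs
  imports Main
begin

text \<open>Elements of Z4 are represented by the integers 0,1,2,3 (ordered 0<1<2<3).
  An m x n matrix is a function nat => nat => int, of which only the entries
  with row index < m and column index < n matter.  A vector of Z4^n is a
  function nat => int with values in {0..3} at indices < n and 0 elsewhere.\<close>

definition z4_mat :: "nat \<Rightarrow> nat \<Rightarrow> (nat \<Rightarrow> nat \<Rightarrow> int) \<Rightarrow> bool" where
  "z4_mat m n M \<longleftrightarrow> (\<forall>i<m. \<forall>j<n. M i j \<in> {0,1,2,3})"

definition bin_mat :: "nat \<Rightarrow> nat \<Rightarrow> (nat \<Rightarrow> nat \<Rightarrow> int) \<Rightarrow> bool" where
  "bin_mat m n M \<longleftrightarrow> (\<forall>i<m. \<forall>j<n. M i j \<in> {0,1})"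

definition lex_le :: "nat \<Rightarrow> (nat \<Rightarrow> int) \<Rightarrow> (nat \<Rightarrow> int) \<Rightarrow> bool" where
  "lex_le n u v \<longleftrightarrow> (\<forall>t<n. u t = v t) \<or>
     (\<exists>t<n. (\<forall>s<t. u s = v s) \<and> u t < v t)"

definition row_sorted :: "nat \<Rightarrow> nat \<Rightarrow> (nat \<Rightarrow> nat \<Rightarrow> int) \<Rightarrow> bool" where
  "row_sorted m n M \<longleftrightarrow> (\<forall>i j. i \<le> j \<longrightarrow> j < m \<longrightarrow> lex_le n (M i) (M j))"

text \<open>The generator matrix G(A,B,D) = [[I_k1, A, B],[O, 2 I_k2, 2 D]] of size
  (k1+k2) x (k1+k2+l).\<close>
definition Gmat :: "nat \<Rightarrow> nat \<Rightarrow> nat \<Rightarrow> (nat \<Rightarrow> nat \<Rightarrow> int) \<Rightarrow> (nat \<Rightarrow> nat \<Rightarrow> int)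
     \<Rightarrow> (nat \<Rightarrow> nat \<Rightarrow> int) \<Rightarrow> (nat \<Rightarrow> nat \<Rightarrow> int)" where
  "Gmat k1 k2 l A B D = (\<lambda>i j.
     if i < k1 then
       (if j < k1 then (if i = j then 1 else 0)
        else if j < k1 + k2 then A i (j - k1)
        else B i (j - k1 - k2))
     else
       (if j < k1 then 0
        else if j < k1 + k2 then (if j - k1 = i - k1 then 2 else 0)
        else 2 * D (i - k1) (j - k1 - k2)))"

definition z4_code :: "nat \<Rightarrow> nat \<Rightarrow> (nat \<Rightarrow> nat \<Rightarrow> int) \<Rightarrow> (nat \<Rightarrow> int) set" where
  "z4_code m n G = {(\<lambda>j. if j < n then (\<Sum>i<m. c i * G i j) mod 4 else 0) | c. True}"

definition z4_equiv :: "nat \<Rightarrow> (nat \<Rightarrow> int) set \<Rightarrow> (nat \<Rightarrow> int) set \<Rightarrow> bool" where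
  "z4_equiv n C C' \<longleftrightarrow> (\<exists>\<sigma> s. bij_betw \<sigma> {..<n} {..<n} \<and> (\<forall>j<n. s j \<in> {1, -1}) \<and>
      C' = (\<lambda>v. (\<lambda>j. if j < n then (s j * v (\<sigma> j)) mod 4 else 0)) ` C)"

end

theory Submission
  imports Defs "HOL-Library.List_Lexorder"
begin

lemma lexle_of_list:
  fixes u v :: "nat \<Rightarrow> int"
  assumes "map u [0..<k] \<le> map v [0..<k]"
  shows "lex_le k u v"
proof (cases "map u [0..<k] = map v [0..<k]")
  case True
  then have "\<forall>t<k. u t = v t" by (simp add: map_eq_conv)
  then show ?thesis unfolding lex_le_def by blast
next
  case False
  then have "(map u [0..<k], map v [0..<k]) \<in> lexord {(a, b). a < b}"
    using assms unfolding list_le_def list_less_def by auto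
  then obtain i where i: "i < k" "take i (map u [0..<k]) = take i (map v [0..<k])"
      "u i < v i"
    unfolding lexord_take_index_conv by auto
  have "\<forall>s<i. u s = v s"
  proof (intro allI impI)
    fix s assume "s < i"
    have "map u [0..<k] ! s = map v [0..<k] ! s" using i \<open>s < i\<close> by (metis nth_take)
    then show "u s = v s" using \<open>s < i\<close> i by simp
  qed
  then show ?thesis unfolding lex_le_def using i by blast
qed

theorem mainTheorem9:
  fixes n k1 k2 :: nat and A B D :: "nat \<Rightarrow> nat \<Rightarrow> int"
  assumes "k1 + k2 \<le> n"
    and "bin_mat k1 k2 A" and "z4_mat k1 (n - k1 - k2) B" and "bin_mat k2 (n - k1 - k2) D"
  shows "\<exists>A' B' D'. bin_mat k1 k2 A' \<and> row_sorted k1 k2 A' \<and>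
           z4_mat k1 (n - k1 - k2) B' \<and> bin_mat k2 (n - k1 - k2) D' \<and>
           z4_equiv n (z4_code (k1 + k2) n (Gmat k1 k2 (n - k1 - k2) A B D))
                      (z4_code (k1 + k2) n (Gmat k1 k2 (n - k1 - k2) A' B' D'))"
proof -
  define key where "key = (\<lambda>i. map (A i) [0..<k2])"
  define xs where "xs = sort_key key [0..<k1]"
  define p where "p = (\<lambda>i. if i < k1 then xs ! i else i)"
  have len: "length xs = k1" unfolding xs_def by simp
  have dist: "distinct xs" unfolding xs_def by simp
  have setxs: "set xs = {..<k1}" unfolding xs_def by auto
  have srt: "sorted (map key xs)" unfolding xs_def by simp
  have plt: "p x < k1 \<longleftrightarrow> x < k1" for x
    using len setxs nth_mem[of x xs] unfolding p_def by auto
  have injp: "inj p"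
  proof (rule injI)
    fix x y assume "p x = p y"
    then show "x = y" using plt[of x] plt[of y] dist len unfolding p_def
      by (auto simp: nth_eq_iff_index_eq split: if_splits)
  qed
  have pre: "\<exists>x. p x = y \<and> (y < k1 \<longrightarrow> x < k1)" for y
  proof (cases "y < k1")
    case True
    then have "y \<in> set xs" using setxs by auto
    then obtain x where "x < k1" "xs ! x = y" using len by (auto simp: in_set_conv_nth)
    then show ?thesis unfolding p_def by auto
  next
    case False then show ?thesis unfolding p_def by auto
  qed
  have bijp: "bij p" using injp pre unfolding bij_def surj_def by metis
  have bijN: "bij_betw p {..<N} {..<N}" if "k1 \<le> N" for N
  proof -
    have "p ` {..<N} = {..<N}"
    proof
      show "p ` {..<N} \<subseteq> {..<N}"
      proof
        fix y assume "y \<in> p ` {..<N}"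
        then obtain x where x: "x < N" "y = p x" by auto
        show "y \<in> {..<N}"
        proof (cases "x < k1")
          case True then show ?thesis using x plt[of x] that by auto
        next
          case False then show ?thesis using x unfolding p_def by auto
        qed
      qed
      show "{..<N} \<subseteq> p ` {..<N}"
      proof
        fix y assume y: "y \<in> {..<N}"
        obtain x where x: "p x = y" "y < k1 \<longrightarrow> x < k1" using pre by blast
        have "x < N" using x y that plt unfolding p_def by (cases "x < k1") auto
        then show "y \<in> p ` {..<N}" using x by auto
      qed
    qed
    then show ?thesis using inj_on_subset[OF injp] by (simp add: bij_betw_def)
  qed
  define A' where "A' = (\<lambda>i. A (p i))"
  define B' where "B' = (\<lambda>i. B (p i))"
  define l where "l = n - k1 - k2"
  define G where "G = Gmat k1 k2 l A B D"
  define G' where "G' = Gmat k1 k2 l A' B' D"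
  have GG: "G' i j = G (p i) (p j)" for i j
  proof -
    have pid: "\<not> x < k1 \<Longrightarrow> p x = x" for x unfolding p_def by simp
    show ?thesis
    proof (cases "i < k1")
      case True
      have "(i = j) = (p i = p j)" using injp by (auto simp: inj_def)
      with True show ?thesis
        unfolding G_def G'_def Gmat_def A'_def B'_def
        using plt[of i] plt[of j] pid[of j] by (simp add: p_def)
    next
      case False
      then show ?thesis
        unfolding G_def G'_def Gmat_def A'_def B'_def
        using plt[of i] plt[of j] pid[of i] pid[of j] by (cases "j < k1") simp_all
    qed
  qed
  have binA': "bin_mat k1 k2 A'" using assms(2) plt unfolding bin_mat_def A'_def by auto
  have zB': "z4_mat k1 l B'" using assms(3) plt unfolding z4_mat_def B'_def l_def by auto
  have rs: "row_sorted k1 k2 A'"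
    unfolding row_sorted_def
  proof (intro allI impI)
    fix i j assume ij: "i \<le> j" "j < k1"
    have "key (xs ! i) \<le> key (xs ! j)"
      using srt ij len by (auto simp: sorted_iff_nth_mono)
    then have "lex_le k2 (A (xs ! i)) (A (xs ! j))"
      unfolding key_def by (rule lexle_of_list)
    then show "lex_le k2 (A' i) (A' j)" using ij unfolding A'_def p_def by auto
  qed
  define m where "m = k1 + k2"
  define vec where "vec = (\<lambda>H c j. if j < n then (\<Sum>i<m. (c i :: int) * H i j) mod 4 else (0::int))"
  have bm: "bij_betw p {..<m} {..<m}" using bijN m_def by simp
  have key_eq: "vec G' (c \<circ> p) = (\<lambda>j. if j < n then (1 * vec G c (p j)) mod 4 else 0)" for c
  proof
    fix j
    show "vec G' (c \<circ> p) j = (if j < n then (1 * vec G c (p j)) mod 4 else 0)"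
    proof (cases "j < n")
      case True
      have pj: "p j < n" using bijN[of n] assms(1) True by (auto simp: bij_betw_def)
      have "(\<Sum>i<m. (c \<circ> p) i * G' i j) = (\<Sum>i<m. c (p i) * G (p i) (p j))"
        by (simp add: GG)
      also have "\<dots> = (\<Sum>i<m. c i * G i (p j))"
        using sum.reindex_bij_betw[OF bm, of "\<lambda>i. c i * G i (p j)"] by simp
      finally show ?thesis unfolding vec_def using True pj by simp
    qed (simp add: vec_def)
  qed
  have codeG: "z4_code m n H = range (vec H)" for H
    unfolding z4_code_def vec_def by auto
  have "z4_code m n G' = (\<lambda>v. \<lambda>j. if j < n then (1 * v (p j)) mod 4 else 0) ` z4_code m n G"
  proof -
    have "range (vec G') = range (\<lambda>c. vec G' (c \<circ> p))"
    proof
      show "range (\<lambda>c. vec G' (c \<circ> p)) \<subseteq> range (vec G')" by auto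
      show "range (vec G') \<subseteq> range (\<lambda>c. vec G' (c \<circ> p))"
      proof
        fix w assume "w \<in> range (vec G')"
        then obtain c where "w = vec G' c" by auto
        moreover have "c = (c \<circ> inv p) \<circ> p" using bijp
          by (auto simp: bij_def inv_f_f)
        ultimately have "w = vec G' ((c \<circ> inv p) \<circ> p)" by simp
        then show "w \<in> range (\<lambda>c. vec G' (c \<circ> p))" using range_eqI[of w "\<lambda>c. vec G' (c \<circ> p)" "c \<circ> inv p"] by blast
      qed
    qed
    then show ?thesis unfolding codeG using key_eq by (simp add: image_image)
  qed
  then have "z4_equiv n (z4_code m n G) (z4_code m n G')"
    unfolding z4_equiv_def using bijN[of n] assms(1)
    by (intro exI[of _ p] exI[of _ "\<lambda>_. 1"]) auto
  then show ?thesis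
    using binA' zB' rs assms(4) unfolding G_def G'_def m_def l_def by blast
qed

end
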